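(* Let $n\geq 1$. There is no non-trivial u-p-cycle $u=u_1\cdots u_N$ for $n$-permutations in which the $\Diamond$'s occur periodically with period $3$, i.e., in which $3$ divides $N$ and there is $r\in\{0,1,2\}$ such that for every position $i$, $u_i=\Diamond$ if and only if $i\equiv r\pmod 3$.
   Context: An $n$-permutation is a permutation of $\{1,\ldots,n\}$. For a word $w$ of distinct numbers, $\mathrm{red}(w)$ is obtained by replacing the $i$-th smallest letter by $i$. Let $\Diamond$ be a symbol not among the integers. A word $f=f_1\cdots f_n$ over the positive integers together with $\Diamond$, whose integer letters are pairwise distinct, covers an $n$-permutation $\pi$ if one can substitute real numbers for the occurrences of $\Diamond$ (independently) so that the resulting word has $n$ pairwise distinct entries and reduces to $\pi$; equivalently, $f_i<f_j\iff\pi_i<\pi_j$ for all positions $i,j$ holding integers. A u-p-cycle for $n$-permutations is a cyclic word $u_1\cdots u_N$, $N\geq n$, over this alphabet containing at least one $\Diamond$, indices read modulo $N$, such that each of its $N$ cyclic factors $u_iu_{i+1}\cdots u_{i+n-1}$ ($1\leq i\leq N$) has pairwise distinct integer letters and every $n$-permutation is covered by exactly one of these factors. It is trivial if all its letters are $\Diamond$. *)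

theory Defs
  imports Complex_Main
begin

text \<open>Letters: \<open>None\<close> is the symbol Diamond, \<open>Some k\<close> (k \<ge> 1) is the positive integer k.
  Words are lists; positions are 0-indexed.\<close>

type_synonym letter = "nat option"

definition is_perm :: "nat \<Rightarrow> nat list \<Rightarrow> bool" where
  "is_perm n \<pi> \<longleftrightarrow> length \<pi> = n \<and> distinct \<pi> \<and> set \<pi> = {1..n}"

definition reduces_to :: "real list \<Rightarrow> nat list \<Rightarrow> bool" where
  "reduces_to w \<pi> \<longleftrightarrow> length w = length \<pi> \<and>
     (\<forall>i<length w. \<forall>j<length w. w ! i < w ! j \<longleftrightarrow> \<pi> ! i < \<pi> ! j)"

definition subst :: "letter list \<Rightarrow> (nat \<Rightarrow> real) \<Rightarrow> real list" where
  "subst f g = map (\<lambda>i. case f ! i of None \<Rightarrow> g i | Some k \<Rightarrow> real k) [0..<length f]"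

definition covers :: "letter list \<Rightarrow> nat list \<Rightarrow> bool" where
  "covers f \<pi> \<longleftrightarrow> (\<exists>g. distinct (subst f g) \<and> reduces_to (subst f g) \<pi>)"

definition int_letters_distinct :: "letter list \<Rightarrow> bool" where
  "int_letters_distinct f \<longleftrightarrow> distinct (filter (\<lambda>x. x \<noteq> None) f)"

definition cfactor :: "letter list \<Rightarrow> nat \<Rightarrow> nat \<Rightarrow> letter list" where
  "cfactor u n i = map (\<lambda>j. u ! ((i + j) mod length u)) [0..<n]"

definition up_cycle :: "nat \<Rightarrow> letter list \<Rightarrow> bool" where
  "up_cycle n u \<longleftrightarrow>
     length u \<ge> n \<and>
     Some 0 \<notin> set u \<and>
     None \<in> set u \<and>
     (\<forall>i<length u. int_letters_distinct (cfactor u n i)) \<and>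
     (\<forall>\<pi>. is_perm n \<pi> \<longrightarrow> (\<exists>!i. i < length u \<and> covers (cfactor u n i) \<pi>))"

definition trivial_cycle :: "letter list \<Rightarrow> bool" where
  "trivial_cycle u \<longleftrightarrow> (\<forall>x\<in>set u. x = None)"

text \<open>Diamonds periodic with period 3 (1-indexed positions i = p+1).\<close>
definition diamonds_period3 :: "letter list \<Rightarrow> bool" where
  "diamonds_period3 u \<longleftrightarrow> 3 dvd length u \<and>
     (\<exists>r<3. \<forall>p<length u. u ! p = None \<longleftrightarrow> (p + 1) mod 3 = r)"

end

theory Submission imports Defs begin

lemma distinct_filter_nth:
  "distinct (filter P xs) \<Longrightarrow> p < length xs \<Longrightarrow> q < length xs \<Longrightarrow> P (xs!p)
   \<Longrightarrow> xs!p = xs!q \<Longrightarrow> p = q"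
proof (induction xs arbitrary: p q)
  case Nil then show ?case by simp
next
  case (Cons x xs)
  show ?case
  proof (cases p)
    case 0
    show ?thesis
    proof (cases q)
      case (Suc q')
      then have "x \<in> set (filter P xs)" using Cons.prems 0 by (auto simp: nth_mem)
      then show ?thesis using Cons.prems 0 by (auto split: if_splits)
    qed (use 0 in simp)
  next
    case (Suc p')
    show ?thesis
    proof (cases q)
      case 0
      then have "x \<in> set (filter P xs)" using Cons.prems Suc by (auto simp: nth_mem)
      then show ?thesis using Cons.prems Suc 0 by (auto split: if_splits)
    next
      case (Suc q')
      have "distinct (filter P xs)" using Cons.prems(1) by (auto split: if_splits)
      then show ?thesis using Cons.IH[of p' q'] Cons.prems \<open>p = Suc p'\<close> Suc by auto
    qed
  qed
qed

definition hh :: "nat \<Rightarrow> real" where "hh m = 1 - 1 / (real m + 2)"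

lemma hh_bounds: "0 < hh m" "hh m < 1"
  by (auto simp: hh_def field_simps)

lemma hh_less: "hh a < hh b \<longleftrightarrow> a < b"
  by (auto simp: hh_def field_simps)

lemma hh_le: "hh a \<le> hh b \<longleftrightarrow> a \<le> b"
  by (auto simp: hh_def field_simps)

lemma rankperm:
  fixes key :: "nat \<Rightarrow> real"
  assumes inj: "inj_on key {0..<n}"
  shows "\<exists>\<sigma>. is_perm n \<sigma> \<and> (\<forall>i<n. \<forall>j<n. \<sigma>!i < \<sigma>!j \<longleftrightarrow> key i < key j)"
proof -
  define c where "c i = card {j. j < n \<and> key j < key i}" for i
  define \<sigma> where "\<sigma> = map (\<lambda>i. Suc (c i)) [0..<n]"
  have len: "length \<sigma> = n" by (simp add: \<sigma>_def)
  have nth: "i < n \<Longrightarrow> \<sigma>!i = Suc (c i)" for i by (simp add: \<sigma>_def)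
  have ord: "c i < c j \<longleftrightarrow> key i < key j" if "i<n" "j<n" for i j
  proof
    assume "key i < key j"
    then have "{k. k < n \<and> key k < key i} \<subset> {k. k < n \<and> key k < key j}"
      using that by auto
    then show "c i < c j" unfolding c_def by (intro psubset_card_mono) auto
  next
    assume "c i < c j"
    show "key i < key j"
    proof (rule ccontr)
      assume "\<not> key i < key j"
      then have "{k. k < n \<and> key k < key j} \<subseteq> {k. k < n \<and> key k < key i}" by auto
      then have "c j \<le> c i" unfolding c_def by (intro card_mono) auto
      with \<open>c i < c j\<close> show False by simp
    qed
  qed
  have ord2: "\<forall>i<n. \<forall>j<n. \<sigma>!i < \<sigma>!j \<longleftrightarrow> key i < key j" using ord nth by simp
  have dist: "distinct \<sigma>"
  proof -
    have "\<sigma>!i \<noteq> \<sigma>!j" if "i<n" "j<n" "i\<noteq>j" for i j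
    proof -
      have "key i \<noteq> key j" using inj that by (auto simp: inj_on_def)
      then have "key i < key j \<or> key j < key i" by linarith
      then show ?thesis using ord2 that by fastforce
    qed
    then show ?thesis by (auto simp: distinct_conv_nth len)
  qed
  have sub: "set \<sigma> \<subseteq> {1..n}"
  proof
    fix x assume "x \<in> set \<sigma>"
    then obtain i where i: "i < n" "x = \<sigma>!i" by (auto simp: in_set_conv_nth len)
    have "{j. j < n \<and> key j < key i} \<subseteq> {0..<n} - {i}" by auto
    then have "c i \<le> card ({0..<n} - {i})" unfolding c_def by (intro card_mono) auto
    also have "\<dots> = n - 1" using i by simp
    finally show "x \<in> {1..n}" using i nth by auto
  qed
  have "card (set \<sigma>) = n" using dist len by (simp add: distinct_card)
  then have "set \<sigma> = {1..n}" using sub by (intro card_subset_eq) auto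
  then show ?thesis using len dist ord2 unfolding is_perm_def by blast
qed

definition agree :: "letter list \<Rightarrow> nat list \<Rightarrow> bool" where
  "agree f \<pi> \<longleftrightarrow> (\<forall>p<length f. \<forall>q<length f. \<forall>a b. f!p = Some a \<longrightarrow> f!q = Some b
      \<longrightarrow> (a < b \<longleftrightarrow> \<pi>!p < \<pi>!q))"

lemma subst_nth: "p < length f \<Longrightarrow> subst f g ! p = (case f!p of None \<Rightarrow> g p | Some k \<Rightarrow> real k)"
  by (cases "f!p") (simp_all add: subst_def)

lemma covers_agree: "covers f \<pi> \<Longrightarrow> agree f \<pi>"
proof -
  assume "covers f \<pi>"
  then obtain g where r: "reduces_to (subst f g) \<pi>" unfolding covers_def by blast
  have l: "length (subst f g) = length f" by (simp add: subst_def)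
  show "agree f \<pi>" unfolding agree_def
  proof (intro allI impI)
    fix p q a b assume pq: "p < length f" "q < length f" "f!p = Some a" "f!q = Some b"
    have "subst f g ! p < subst f g ! q \<longleftrightarrow> \<pi>!p < \<pi>!q"
      using r pq l unfolding reduces_to_def by auto
    then show "a < b \<longleftrightarrow> \<pi>!p < \<pi>!q" using pq by (simp add: subst_nth)
  qed
qed

lemma interp:
  fixes P Q :: "nat set" and A B :: "nat \<Rightarrow> nat"
  assumes finP: "finite P"
    and agr: "\<forall>x\<in>P\<inter>Q. \<forall>y\<in>P\<inter>Q. A x < A y \<longleftrightarrow> B x < B y"
    and pos: "\<forall>x\<in>P. A x \<ge> 1"
    and injB: "inj_on B Q"
  shows "\<exists>key::nat\<Rightarrow>real. (\<forall>p\<in>P. key p = real (A p))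
     \<and> (\<forall>p\<in>Q. \<forall>q\<in>Q. key p < key q \<longleftrightarrow> B p < B q)
     \<and> (\<forall>p. p \<notin> P \<longrightarrow> (\<forall>m::nat. key p \<noteq> real m))"
proof -
  define L where "L p = Max (insert 0 (A ` {x\<in>P\<inter>Q. B x < B p}))" for p
  define key where "key p = (if p \<in> P then real (A p) else real (L p) + hh (B p))" for p
  have finS: "finite (insert 0 (A ` {x\<in>P\<inter>Q. B x < B p}))" for p using finP by auto
  have Lge: "A x \<le> L p" if "x \<in> P" "x \<in> Q" "B x < B p" for x p
    unfolding L_def using that finS[of p] by (intro Max_ge) auto
  have Lmono: "L p \<le> L q" if "B p \<le> B q" for p q
    unfolding L_def using that finS[of p] finS[of q]
    by (intro Max_mono) auto
  have Llt: "L q < A p" if "p \<in> P" "p \<in> Q" "B q \<le> B p" for p q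
  proof -
    have "\<forall>y\<in>insert 0 (A ` {x\<in>P\<inter>Q. B x < B q}). y < A p"
      using that pos agr by auto
    then show ?thesis unfolding L_def using finS[of q] by (subst Max_less_iff) auto
  qed
  have k1: "\<forall>p\<in>P. key p = real (A p)" by (simp add: key_def)
  have k2: "key p < key q \<longleftrightarrow> B p < B q" if "p \<in> Q" "q \<in> Q" for p q
  proof (cases "p \<in> P")
    case pP: True
    show ?thesis
    proof (cases "q \<in> P")
      case True then show ?thesis using agr pP that by (auto simp: key_def)
    next
      case qP: False
      have kq: "key q = real (L q) + hh (B q)" using qP by (simp add: key_def)
      show ?thesis
      proof
        assume "key p < key q"
        show "B p < B q"
        proof (rule ccontr)
          assume "\<not> B p < B q"
          then have "L q < A p" using Llt pP that by auto
          then have "real (L q) + 1 \<le> real (A p)" by linarith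
          then show False using \<open>key p < key q\<close> kq hh_bounds[of "B q"] pP by (simp add: key_def)
        qed
      next
        assume "B p < B q"
        then have "A p \<le> L q" using Lge pP that by auto
        then show "key p < key q" using kq hh_bounds[of "B q"] pP by (simp add: key_def)
      qed
    qed
  next
    case pP: False
    have kp: "key p = real (L p) + hh (B p)" using pP by (simp add: key_def)
    show ?thesis
    proof (cases "q \<in> P")
      case qP: True
      show ?thesis
      proof
        assume "B p < B q"
        then have "L p < A q" using Llt qP that by auto
        then have "real (L p) + 1 \<le> real (A q)" by linarith
        then show "key p < key q" using kp hh_bounds[of "B p"] qP by (simp add: key_def)
      next
        assume "key p < key q"
        show "B p < B q"
        proof (rule ccontr)
          assume "\<not> B p < B q"
          then have "B q < B p \<or> B q = B p" by auto
          then have "A q \<le> L p"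
          proof
            assume "B q < B p" then show ?thesis using Lge qP that by auto
          next
            assume "B q = B p"
            then have "q = p" using injB that by (auto simp: inj_on_def)
            then show ?thesis using pP qP by simp
          qed
          then show False using \<open>key p < key q\<close> kp hh_bounds[of "B p"] qP by (simp add: key_def)
        qed
      qed
    next
      case qP: False
      have kq: "key q = real (L q) + hh (B q)" using qP by (simp add: key_def)
      show ?thesis
      proof
        assume "B p < B q"
        then have "L p \<le> L q" using Lmono by auto
        then show "key p < key q" using kp kq hh_less[of "B p" "B q"] \<open>B p < B q\<close> by simp
      next
        assume "key p < key q"
        show "B p < B q"
        proof (rule ccontr)
          assume "\<not> B p < B q"
          then have "L q \<le> L p" "hh (B q) \<le> hh (B p)" using Lmono hh_le by auto
          then show False using \<open>key p < key q\<close> kp kq by simp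
        qed
      qed
    qed
  qed
  have k3: "key p \<noteq> real m" if "p \<notin> P" for p and m :: nat
  proof
    assume e: "key p = real m"
    have kp: "key p = real (L p) + hh (B p)" using that by (simp add: key_def)
    then have "real (L p) < real m" "real m < real (L p) + 1" using e hh_bounds[of "B p"] by auto
    then have "L p < m" "m < L p + 1" by linarith+
    then show False by linarith
  qed
  show ?thesis using k1 k2 k3 by blast
qed

lemma agree_covers:
  assumes perm: "is_perm (length f) \<pi>" and ag: "agree f \<pi>" and z: "Some 0 \<notin> set f"
  shows "covers f \<pi>"
proof -
  let ?n = "length f"
  define P where "P = {p. p < ?n \<and> f!p \<noteq> None}"
  define Q where "Q = {0..<?n}"
  define A where "A p = the (f!p)" for p
  define B where "B p = \<pi>!p" for p
  have finP: "finite P" unfolding P_def by auto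
  have fs: "f!x = Some (A x)" if "x \<in> P" for x
    using that unfolding P_def A_def by auto
  have agr: "\<forall>x\<in>P\<inter>Q. \<forall>y\<in>P\<inter>Q. A x < A y \<longleftrightarrow> B x < B y"
  proof (intro ballI)
    fix x y assume xy: "x \<in> P \<inter> Q" "y \<in> P \<inter> Q"
    then have "x < ?n" "y < ?n" unfolding P_def by auto
    then show "A x < A y \<longleftrightarrow> B x < B y"
      using ag fs xy unfolding agree_def B_def by blast
  qed
  have pos: "\<forall>x\<in>P. A x \<ge> 1"
  proof
    fix x assume x: "x \<in> P"
    then have "f!x \<in> set f" unfolding P_def by auto
    then have "A x \<noteq> 0" using z fs[OF x] by (metis)
    then show "A x \<ge> 1" by simp
  qed
  have lp: "length \<pi> = ?n" and dp: "distinct \<pi>" using perm by (auto simp: is_perm_def)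
  have injB: "inj_on B Q" unfolding inj_on_def Q_def B_def using dp lp by (simp add: nth_eq_iff_index_eq)
  obtain key where k1: "\<forall>p\<in>P. key p = real (A p)"
     and k2: "\<forall>p\<in>Q. \<forall>q\<in>Q. key p < key q \<longleftrightarrow> B p < B q"
    using interp[OF finP agr pos injB] by blast
  have se: "subst f key = map key [0..<?n]"
  proof (rule nth_equalityI)
    show "length (subst f key) = length (map key [0..<?n])" by (simp add: subst_def)
  next
    fix i assume "i < length (subst f key)"
    then have i: "i < ?n" by (simp add: subst_def)
    show "subst f key ! i = map key [0..<?n] ! i"
    proof (cases "f!i")
      case None then show ?thesis using i by (simp add: subst_nth)
    next
      case (Some k)
      then have "i \<in> P" using i by (simp add: P_def)
      then show ?thesis using i Some k1 by (simp add: subst_nth A_def)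
    qed
  qed
  have red: "reduces_to (subst f key) \<pi>"
    unfolding reduces_to_def se using lp k2 by (simp add: Q_def B_def)
  have "inj_on key {0..<?n}"
  proof (rule inj_onI)
    fix i j assume ij: "i \<in> {0..<?n}" "j \<in> {0..<?n}" "key i = key j"
    have "key i < key j \<longleftrightarrow> \<pi>!i < \<pi>!j" "key j < key i \<longleftrightarrow> \<pi>!j < \<pi>!i"
      using k2 ij(1,2) unfolding Q_def B_def by blast+
    then have "\<not> \<pi>!i < \<pi>!j" "\<not> \<pi>!j < \<pi>!i" using ij(3) by auto
    then have "\<pi>!i = \<pi>!j" by simp
    then show "i = j" using dp lp ij by (simp add: nth_eq_iff_index_eq)
  qed
  then have "distinct (subst f key)" unfolding se by (simp add: distinct_map)
  then show ?thesis using red unfolding covers_def by blast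
qed

lemma lt3: "(x::nat) < 3 \<Longrightarrow> x = 0 \<or> x = 1 \<or> x = 2" by auto

lemma m3: "(r::nat) < 3 \<Longrightarrow> (i + p + 1) mod 3 = r \<longleftrightarrow> p mod 3 = (r + 2 + 2*i) mod 3"
proof -
  assume r: "r < 3"
  have a: "(i + p + 1) mod 3 = (i mod 3 + p mod 3 + 1) mod 3"
    by (metis mod_add_eq mod_add_left_eq)
  have b: "(r + 2 + 2*i) mod 3 = (r + 2 + 2*(i mod 3)) mod 3"
    by (metis mod_add_right_eq mod_mult_right_eq)
  have c: "(x + y + 1) mod 3 = r \<longleftrightarrow> y = (r + 2 + 2*x) mod 3" if "x < 3" "y < 3" for x y :: nat
    using lt3[OF that(1)] lt3[OF that(2)] lt3[OF r] by (elim disjE; simp)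
  have "(i mod 3 + p mod 3 + 1) mod 3 = r \<longleftrightarrow> p mod 3 = (r + 2 + 2*(i mod 3)) mod 3"
    by (rule c) auto
  then show ?thesis using a b by simp
qed

lemma m3w: "(r + 2 + 2 * ((2*e + r + 2) mod 3)) mod 3 = (e::nat) mod 3"
proof -
  have "(r + 2 + 2 * ((2*e + r + 2) mod 3)) mod 3 = (r + 2 + 2 * (2*e + r + 2)) mod 3"
    by (metis mod_add_right_eq mod_mult_right_eq)
  also have "r + 2 + 2 * (2*e + r + 2) = e + 3*(e + r + 2)" by simp
  also have "(e + 3*(e + r + 2)) mod 3 = e mod 3" by (rule mod_mult_self2)
  finally show ?thesis .
qed

lemma m3s: "((d::nat) mod 3 + 1) mod 3 = (d + 1) mod 3" by (metis mod_add_left_eq)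

theorem theorem3:
  fixes n :: nat
  assumes "n \<ge> 1"
  shows "\<not> (\<exists>u. up_cycle n u \<and> \<not> trivial_cycle u \<and> diamonds_period3 u)"
proof
  assume "\<exists>u. up_cycle n u \<and> \<not> trivial_cycle u \<and> diamonds_period3 u"
  then obtain u where up: "up_cycle n u" and per: "diamonds_period3 u" by blast
  define N where "N = length u"
  obtain r where r3: "r < 3" and hr: "\<forall>p<N. u!p = None \<longleftrightarrow> (p+1) mod 3 = r"
    using per unfolding diamonds_period3_def N_def by blast
  have dvd3: "3 dvd N" using per unfolding diamonds_period3_def N_def by blast
  have Nn: "n \<le> N" and z: "Some 0 \<notin> set u"
    and dist: "\<forall>i<N. int_letters_distinct (cfactor u n i)"
    and uniq: "\<forall>\<pi>. is_perm n \<pi> \<longrightarrow> (\<exists>!i. i < N \<and> covers (cfactor u n i) \<pi>)"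
    using up unfolding up_cycle_def N_def by auto
  have N3: "3 \<le> N" using dvd3 Nn assms by (auto elim!: dvdE)
  define cf where "cf i = cfactor u n i" for i
  define dc where "dc i = (r + 2 + 2*i) mod 3" for i
  have len: "length (cf i) = n" for i by (simp add: cf_def cfactor_def)
  have nth: "cf i ! p = u ! ((i+p) mod N)" if "p < n" for i p
    using that by (simp add: cf_def cfactor_def N_def)
  have dia: "cf i ! p = None \<longleftrightarrow> p mod 3 = dc i" if "p < n" for i p
  proof -
    have "(i+p) mod N < N" using N3 by simp
    then have e1: "cf i ! p = None \<longleftrightarrow> ((i+p) mod N + 1) mod 3 = r" using hr nth[OF that] by simp
    have e2: "((i+p) mod N) mod 3 = (i+p) mod 3" using dvd3 by (rule mod_mod_cancel)
    have e3: "((i+p) mod N + 1) mod 3 = (i + p + 1) mod 3"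
      by (metis e2 mod_add_left_eq)
    have e4: "(i + p + 1) mod 3 = r \<longleftrightarrow> p mod 3 = (r + 2 + 2*i) mod 3" using r3 by (rule m3)
    show ?thesis using e1 e3 e4 unfolding dc_def by simp
  qed
  have setcf: "set (cf i) \<subseteq> set u" for i
  proof
    fix x assume "x \<in> set (cf i)"
    then obtain p where p: "p < n" "x = cf i ! p" by (auto simp: in_set_conv_nth len)
    have "(i+p) mod N < N" using N3 by simp
    then show "x \<in> set u" using nth[OF p(1)] p(2) unfolding N_def by simp
  qed
  define lt where "lt i p = the (cf i ! p)" for i p
  have some: "cf i ! p = Some (lt i p)" if "p < n" "p mod 3 \<noteq> dc i" for i p
    using dia[OF that(1)] that(2) unfolding lt_def by auto
  have pos: "lt i p \<ge> 1" if "p < n" "p mod 3 \<noteq> dc i" for i p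
  proof -
    have "cf i ! p \<in> set u" using setcf that len by (metis nth_mem subsetD)
    then have "lt i p \<noteq> 0" using some[OF that] z by metis
    then show ?thesis by simp
  qed
  have inj: "p = q" if "i < N" "p<n" "q<n" "p mod 3 \<noteq> dc i" "q mod 3 \<noteq> dc i" "lt i p = lt i q"
    for i p q
  proof -
    have d: "distinct (filter (\<lambda>x. x \<noteq> None) (cf i))"
      using dist that(1) unfolding cf_def int_letters_distinct_def by blast
    have sp: "cf i ! p = Some (lt i p)" using some that by blast
    have sq: "cf i ! q = Some (lt i q)" using some that by blast
    show ?thesis
      by (rule distinct_filter_nth[OF d]) (simp_all add: len that sp sq)
  qed
  have covagree: "lt i p < lt i q \<longleftrightarrow> \<pi>!p < \<pi>!q"
    if "covers (cf i) \<pi>" "p<n" "q<n" "p mod 3 \<noteq> dc i" "q mod 3 \<noteq> dc i" for i \<pi> p q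
  proof -
    have ag: "agree (cf i) \<pi>" using covers_agree[OF that(1)] .
    have l: "p < length (cf i)" "q < length (cf i)" using that len by auto
    show ?thesis using ag l some[OF that(2,4)] some[OF that(3,5)] unfolding agree_def by blast
  qed
  have agreecov: "covers (cf i) \<pi>"
    if "is_perm n \<pi>" "\<forall>p<n. \<forall>q<n. p mod 3 \<noteq> dc i \<longrightarrow> q mod 3 \<noteq> dc i \<longrightarrow>
        (lt i p < lt i q \<longleftrightarrow> \<pi>!p < \<pi>!q)" for i \<pi>
  proof (rule agree_covers)
    show "is_perm (length (cf i)) \<pi>" using that len by simp
    show "Some 0 \<notin> set (cf i)" using setcf z by blast
    show "agree (cf i) \<pi>" unfolding agree_def
    proof (intro allI impI)
      fix p q a b assume h: "p < length (cf i)" "q < length (cf i)" "cf i ! p = Some a" "cf i ! q = Some b"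
      have pq: "p < n" "q < n" using h len by auto
      then have "p mod 3 \<noteq> dc i" "q mod 3 \<noteq> dc i" using dia[of p i] dia[of q i] h(3,4) by auto
      moreover have "lt i p = a" "lt i q = b" using h unfolding lt_def by auto
      ultimately show "a < b \<longleftrightarrow> \<pi>!p < \<pi>!q" using that(2) pq by blast
    qed
  qed
  define w where "w e = (2*e + r + 2) mod 3" for e :: nat
  have w3: "w e < 3" for e unfolding w_def by simp
  have dcw: "dc (w e) = e mod 3" for e unfolding w_def dc_def by (rule m3w)
  define kr where "kr p = real (p mod 3) + hh (lt (w ((p mod 3 + 1) mod 3)) p)" for p
  have krint: "p mod 3 \<noteq> dc (w ((p mod 3 + 1) mod 3))" for p
  proof -
    have c: "x \<noteq> (x+1) mod 3" if "x < 3" for x :: nat using lt3[OF that] by (elim disjE; simp)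
    have "p mod 3 < 3" by simp
    then show ?thesis unfolding dcw using c[of "p mod 3"] by simp
  qed
  have floorkr: "\<lfloor>kr p\<rfloor> = int (p mod 3)" for p
    unfolding kr_def using hh_bounds[of "lt (w ((p mod 3 + 1) mod 3)) p"]
    by (intro floor_unique) auto
  have injkr: "inj_on kr {0..<n}"
  proof (rule inj_onI)
    fix p q assume pq: "p \<in> {0..<n}" "q \<in> {0..<n}" "kr p = kr q"
    have m: "p mod 3 = q mod 3" using floorkr[of p] floorkr[of q] pq(3) by simp
    then have "hh (lt (w ((p mod 3 + 1) mod 3)) p) = hh (lt (w ((p mod 3 + 1) mod 3)) q)"
      using pq(3) unfolding kr_def by simp
    then have "lt (w ((p mod 3 + 1) mod 3)) p = lt (w ((p mod 3 + 1) mod 3)) q"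
      using hh_less by (metis linorder_neqE_nat order_less_irrefl)
    then show "p = q"
      using inj[of "w ((p mod 3 + 1) mod 3)" p q] pq krint[of p] krint[of q] m w3 N3
      by (metis atLeastLessThan_iff order_less_le_trans)
  qed
  have krord: "kr p < kr q \<longleftrightarrow> lt (w ((c + 1) mod 3)) p < lt (w ((c + 1) mod 3)) q"
    if "p mod 3 = c" "q mod 3 = c" for p q c
    using that hh_less unfolding kr_def by simp
  obtain \<rho> where prho: "is_perm n \<rho>" and ordrho: "\<forall>i<n. \<forall>j<n. \<rho>!i < \<rho>!j \<longleftrightarrow> kr i < kr j"
    using rankperm[OF injkr] by blast
  obtain i where iN: "i < N" and covi: "covers (cf i) \<rho>"
    using uniq prho unfolding cf_def by blast
  define d where "d = dc i"
  have d3: "d < 3" unfolding d_def dc_def by simp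
  define v where "v = w ((d + 2) mod 3)"
  have dcv: "dc v = (d + 2) mod 3" unfolding v_def dcw by simp
  have vN: "v < N" using w3 N3 unfolding v_def by (metis order_less_le_trans)
  define P where "P = {p. p < n \<and> p mod 3 \<noteq> d}"
  define Q where "Q = {p. p < n \<and> p mod 3 \<noteq> (d + 2) mod 3}"
  have PQ: "p \<in> P \<inter> Q \<longleftrightarrow> p < n \<and> p mod 3 = (d+1) mod 3" for p
  proof -
    have "p mod 3 < 3" by simp
    then show ?thesis unfolding P_def Q_def using d3 by (auto dest!: lt3)
  qed
  have agr: "\<forall>x\<in>P\<inter>Q. \<forall>y\<in>P\<inter>Q. lt i x < lt i y \<longleftrightarrow> lt v x < lt v y"
  proof (intro ballI)
    fix x y assume xy: "x \<in> P \<inter> Q" "y \<in> P \<inter> Q"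
    then have h: "x < n" "y < n" "x mod 3 = (d+1) mod 3" "y mod 3 = (d+1) mod 3" using PQ by auto
    have "lt i x < lt i y \<longleftrightarrow> \<rho>!x < \<rho>!y"
      using covagree[OF covi h(1,2)] xy unfolding P_def d_def by auto
    also have "\<dots> \<longleftrightarrow> kr x < kr y" using ordrho h by auto
    also have "\<dots> \<longleftrightarrow> lt (w (((d+1) mod 3 + 1) mod 3)) x < lt (w (((d+1) mod 3 + 1) mod 3)) y"
      using krord h(3,4) by blast
    also have "((d+1) mod 3 + 1) mod 3 = (d + 2) mod 3" using m3s[of "d+1"] by simp
    finally show "lt i x < lt i y \<longleftrightarrow> lt v x < lt v y" unfolding v_def .
  qed
  have posA: "\<forall>x\<in>P. lt i x \<ge> 1" using pos unfolding P_def d_def by auto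
  have injB: "inj_on (lt v) Q"
    using inj[OF vN] unfolding inj_on_def Q_def dcv by blast
  have finP: "finite P" unfolding P_def by auto
  obtain key where k1: "\<forall>p\<in>P. key p = real (lt i p)"
    and k2: "\<forall>p\<in>Q. \<forall>q\<in>Q. key p < key q \<longleftrightarrow> lt v p < lt v q"
    and k3: "\<forall>p. p \<notin> P \<longrightarrow> (\<forall>m::nat. key p \<noteq> real m)"
    using interp[OF finP agr posA injB] by blast
  have injk: "inj_on key {0..<n}"
  proof (rule inj_onI)
    fix p q assume pq: "p \<in> {0..<n}" "q \<in> {0..<n}" "key p = key q"
    have PorQ: "x \<in> P \<or> x \<in> Q" if "x < n" for x
      unfolding P_def Q_def using that d3 by (auto dest!: lt3)
    show "p = q"
    proof (cases "p \<in> P \<and> q \<in> P")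
      case True
      then show ?thesis using k1 pq inj[OF iN, of p q] unfolding P_def d_def by auto
    next
      case F1: False
      show ?thesis
      proof (cases "p \<in> Q \<and> q \<in> Q")
        case True
        then have "lt v p = lt v q" using k2 pq(3) by (metis linorder_neqE_nat order_less_irrefl)
        then show ?thesis using injB True by (auto simp: inj_on_def)
      next
        case False
        then have "(p \<in> P \<and> q \<notin> P) \<or> (q \<in> P \<and> p \<notin> P)"
          using F1 PorQ pq by auto
        then show ?thesis using k1 k3 pq(3) by metis
      qed
    qed
  qed
  obtain \<sigma> where ps: "is_perm n \<sigma>" and ords: "\<forall>a<n. \<forall>b<n. \<sigma>!a < \<sigma>!b \<longleftrightarrow> key a < key b"
    using rankperm[OF injk] by blast
  have c1: "covers (cf i) \<sigma>"
  proof (rule agreecov[OF ps], intro allI impI)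
    fix p q assume h: "p < n" "q < n" "p mod 3 \<noteq> dc i" "q mod 3 \<noteq> dc i"
    then have "p \<in> P" "q \<in> P" unfolding P_def d_def by auto
    then show "lt i p < lt i q \<longleftrightarrow> \<sigma>!p < \<sigma>!q" using k1 ords h by auto
  qed
  have c2: "covers (cf v) \<sigma>"
  proof (rule agreecov[OF ps], intro allI impI)
    fix p q assume h: "p < n" "q < n" "p mod 3 \<noteq> dc v" "q mod 3 \<noteq> dc v"
    then have "p \<in> Q" "q \<in> Q" unfolding Q_def dcv by auto
    then show "lt v p < lt v q \<longleftrightarrow> \<sigma>!p < \<sigma>!q" using k2 ords h by auto
  qed
  have "i = v" using uniq ps c1 c2 iN vN unfolding cf_def by blast
  then have "d = (d + 2) mod 3" using dcv unfolding d_def by simp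
  then show False using d3 by (auto dest!: lt3)
qed

end
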